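(* There is no binary relation $\succsim$ on $l_\infty$ that satisfies Weak order, Monotonicity, Continuity, ICRP, Convexity, ISU and IPIS and is represented by a constant equivalent $I:l_\infty\to\mathbb R$.
   Context: $l_\infty$: real bounded sequences indexed by $\mathbb N$; $\theta\in\mathbb R$ also a constant sequence; $x\ge y$ coordinatewise. A constant equivalent representing $\succsim$ is $I$ with $x\sim I(x)$ and $x\succsim y\iff I(x)\ge I(y)$. For a bijection $\sigma:\mathbb N\to\mathbb N$, $d_\sigma=(d_{\sigma(0)},d_{\sigma(1)},\dots)$. Weak order: complete, transitive. Monotonicity: $x\ge y\Rightarrow x\succsim y$, $1\succ0$. Continuity: for $x\succsim y\succsim z$ the sets $\{\alpha\in[0,1]:\alpha x+(1-\alpha)z\succsim y\}$, $\{\alpha:y\succsim\alpha x+(1-\alpha)z\}$ are closed. ICRP: $x\succsim y\Rightarrow x+\theta\succsim y+\theta$. Convexity: $x\succsim\theta,y\succsim\theta\Rightarrow\lambda x+(1-\lambda)y\succsim\theta$ for $\lambda\in[0,1]$. ISU: $x\succsim y$, $\alpha\ge0\Rightarrow\alpha x\succsim\alpha y$. IPIS: for every bijection $\sigma:\mathbb N\to\mathbb N$ and $x,d\in l_\infty$, $x+d\succsim x$ implies $x+d_\sigma\succsim x$. *)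

theory Defs
  imports Complex_Main
begin

definition linf :: "(nat \<Rightarrow> real) set" where
  "linf = {x. \<exists>B. \<forall>n. \<bar>x n\<bar> \<le> B}"

definition cst :: "real \<Rightarrow> nat \<Rightarrow> real" where
  "cst t = (\<lambda>_. t)"

definition weak_order :: "((nat \<Rightarrow> real) \<Rightarrow> (nat \<Rightarrow> real) \<Rightarrow> bool) \<Rightarrow> bool" where
  "weak_order R \<longleftrightarrow>
     (\<forall>x\<in>linf. \<forall>y\<in>linf. R x y \<or> R y x) \<and>
     (\<forall>x\<in>linf. \<forall>y\<in>linf. \<forall>z\<in>linf. R x y \<longrightarrow> R y z \<longrightarrow> R x z)"

definition monotonicity :: "((nat \<Rightarrow> real) \<Rightarrow> (nat \<Rightarrow> real) \<Rightarrow> bool) \<Rightarrow> bool" where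
  "monotonicity R \<longleftrightarrow>
     (\<forall>x\<in>linf. \<forall>y\<in>linf. (\<forall>n. x n \<ge> y n) \<longrightarrow> R x y) \<and>
     R (cst 1) (cst 0) \<and> \<not> R (cst 0) (cst 1)"

definition continuity :: "((nat \<Rightarrow> real) \<Rightarrow> (nat \<Rightarrow> real) \<Rightarrow> bool) \<Rightarrow> bool" where
  "continuity R \<longleftrightarrow>
     (\<forall>x\<in>linf. \<forall>y\<in>linf. \<forall>z\<in>linf. R x y \<longrightarrow> R y z \<longrightarrow>
        closed {a \<in> {0..1::real}. R (\<lambda>n. a * x n + (1 - a) * z n) y} \<and>
        closed {a \<in> {0..1::real}. R y (\<lambda>n. a * x n + (1 - a) * z n)})"

definition ICRP :: "((nat \<Rightarrow> real) \<Rightarrow> (nat \<Rightarrow> real) \<Rightarrow> bool) \<Rightarrow> bool" where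
  "ICRP R \<longleftrightarrow>
     (\<forall>x\<in>linf. \<forall>y\<in>linf. \<forall>t::real. R x y \<longrightarrow> R (\<lambda>n. x n + t) (\<lambda>n. y n + t))"

definition convexity :: "((nat \<Rightarrow> real) \<Rightarrow> (nat \<Rightarrow> real) \<Rightarrow> bool) \<Rightarrow> bool" where
  "convexity R \<longleftrightarrow>
     (\<forall>x\<in>linf. \<forall>y\<in>linf. \<forall>t::real. \<forall>l\<in>{0..1::real}.
        R x (cst t) \<longrightarrow> R y (cst t) \<longrightarrow> R (\<lambda>n. l * x n + (1 - l) * y n) (cst t))"

definition ISU :: "((nat \<Rightarrow> real) \<Rightarrow> (nat \<Rightarrow> real) \<Rightarrow> bool) \<Rightarrow> bool" where
  "ISU R \<longleftrightarrow>
     (\<forall>x\<in>linf. \<forall>y\<in>linf. \<forall>a::real. R x y \<longrightarrow> a \<ge> 0 \<longrightarrow> R (\<lambda>n. a * x n) (\<lambda>n. a * y n))"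

definition IPIS :: "((nat \<Rightarrow> real) \<Rightarrow> (nat \<Rightarrow> real) \<Rightarrow> bool) \<Rightarrow> bool" where
  "IPIS R \<longleftrightarrow>
     (\<forall>\<sigma>::nat \<Rightarrow> nat. bij \<sigma> \<longrightarrow> (\<forall>x\<in>linf. \<forall>d\<in>linf.
        R (\<lambda>n. x n + d n) x \<longrightarrow> R (\<lambda>n. x n + d (\<sigma> n)) x))"

definition constant_equivalent ::
  "((nat \<Rightarrow> real) \<Rightarrow> (nat \<Rightarrow> real) \<Rightarrow> bool) \<Rightarrow> ((nat \<Rightarrow> real) \<Rightarrow> real) \<Rightarrow> bool" where
  "constant_equivalent R I \<longleftrightarrow>
     (\<forall>x\<in>linf. R x (cst (I x)) \<and> R (cst (I x)) x) \<and>
     (\<forall>x\<in>linf. \<forall>y\<in>linf. R x y \<longleftrightarrow> I x \<ge> I y)"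

end

theory Submission
  imports Defs
begin

definition sg :: "nat \<Rightarrow> nat" where "sg n = (if n mod 3 = 0 then 2*(n div 3) else if n mod 3 = 1 then 4*(n div 3)+1 else 4*(n div 3)+3)"
definition tg :: "nat \<Rightarrow> nat" where "tg m = (if even m then 3*(m div 2) else if m mod 4 = 1 then 3*(m div 4)+1 else 3*(m div 4)+2)"
definition rh :: "nat \<Rightarrow> nat" where "rh n = 3*(n div 3) + (n mod 3 + 1) mod 3"
definition rh' :: "nat \<Rightarrow> nat" where "rh' n = 3*(n div 3) + (n mod 3 + 2) mod 3"
lemma tg_sg: "tg (sg n) = n"
proof -
  consider "n mod 3 = 0" | "n mod 3 = 1" | "n mod 3 = 2" by linarith
  then show ?thesis
  proof cases
    case 1 
    have "3*(n div 3) = n" using 1 by presburger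
    then show ?thesis using 1 unfolding sg_def tg_def by simp
  next
    case 2
    have "sg n = 4*(n div 3)+1" using 2 by (simp add: sg_def)
    moreover have "odd (4*(n div 3)+1)" by simp
    moreover have "(4*(n div 3)+1) mod 4 = 1" "(4*(n div 3)+1) div 4 = n div 3" by simp_all
    ultimately show ?thesis using 2 unfolding tg_def by presburger
  next
    case 3
    have "sg n = 4*(n div 3)+3" using 3 by (simp add: sg_def)
    moreover have "odd (4*(n div 3)+3)" by simp
    moreover have "(4*(n div 3)+3) mod 4 = 3" "(4*(n div 3)+3) div 4 = n div 3" by simp_all
    ultimately show ?thesis using 3 unfolding tg_def by presburger
  qed
qed
lemma sg_tg: "sg (tg m) = m"
proof -
  have "even m \<or> m mod 4 = 1 \<or> m mod 4 = 3" by presburger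
  then consider "even m" | "m mod 4 = 1" | "m mod 4 = 3" by blast
  then show ?thesis
  proof cases
    case 1
    have "tg m = 3*(m div 2)" using 1 by (simp add: tg_def)
    moreover have "(3*(m div 2)) mod 3 = 0" "(3*(m div 2)) div 3 = m div 2" by simp_all
    moreover have "2*(m div 2) = m" using 1 by simp
    ultimately show ?thesis unfolding sg_def by simp
  next
    case 2
    have "odd m" using 2 by presburger
    then have "tg m = 3*(m div 4)+1" using 2 by (simp add: tg_def)
    moreover have "(3*(m div 4)+1) mod 3 = 1" "(3*(m div 4)+1) div 3 = m div 4" by simp_all
    moreover have "4*(m div 4)+1 = m" using 2 by presburger
    ultimately show ?thesis unfolding sg_def by simp
  next
    case 3
    have "odd m" using 3 by presburger
    then have "tg m = 3*(m div 4)+2" using 3 by (simp add: tg_def)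
    moreover have "(3*(m div 4)+2) mod 3 = 2" "(3*(m div 4)+2) div 3 = m div 4" by arith+
    moreover have "4*(m div 4)+3 = m" using 3 by presburger
    ultimately show ?thesis unfolding sg_def by simp
  qed
qed
lemma bij_sg: "bij sg"
  by (rule o_bij[of tg]) (auto simp: fun_eq_iff tg_sg sg_tg)
lemma d3: "r < 3 \<Longrightarrow> (3*q+r) div 3 = (q::nat)" "r < 3 \<Longrightarrow> (3*q+r) mod 3 = (r::nat)" by simp_all
lemma rh_eq: "rh n = 3*(n div 3) + (n mod 3 + 1) mod 3" "rh' n = 3*(n div 3) + (n mod 3 + 2) mod 3"
  by (simp_all add: rh_def rh'_def)
lemma rr: "rh (rh' n) = n" "rh' (rh n) = n"
proof -
  have r: "n mod 3 < 3" by simp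
  have "(n mod 3 + 2) mod 3 < 3" "(n mod 3 + 1) mod 3 < 3" by simp_all
  then have a: "rh (rh' n) = 3*(n div 3) + ((n mod 3 + 2) mod 3 + 1) mod 3"
    "rh' (rh n) = 3*(n div 3) + ((n mod 3 + 1) mod 3 + 2) mod 3"
    unfolding rh_def rh'_def by (simp_all only: d3)
  have "n mod 3 = 0 \<or> n mod 3 = 1 \<or> n mod 3 = 2" by linarith
  then have "((n mod 3 + 2) mod 3 + 1) mod 3 = n mod 3" "((n mod 3 + 1) mod 3 + 2) mod 3 = n mod 3" by auto
  then show "rh (rh' n) = n" "rh' (rh n) = n" using a by simp_all
qed
lemma rh_mod3: "rh n mod 3 = (n mod 3 + 1) mod 3"
proof -
  have "(n mod 3 + 1) mod 3 < 3" by simp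
  then show ?thesis unfolding rh_def by (simp only: d3)
qed
lemma rh_mod: "rh n mod 3 = 0 \<longleftrightarrow> n mod 3 = 2" "rh n mod 3 = 2 \<longleftrightarrow> n mod 3 = 1"
proof -
  have "n mod 3 = 0 \<or> n mod 3 = 1 \<or> n mod 3 = 2" by linarith
  then have c: "(rh n mod 3 = 0 \<longleftrightarrow> n mod 3 = 2) \<and> (rh n mod 3 = 2 \<longleftrightarrow> n mod 3 = 1)"
  proof (elim disjE)
    assume h: "n mod 3 = 0" then have "rh n mod 3 = 1" using rh_mod3[of n] by simp
    then show ?thesis using h by simp
  next
    assume h: "n mod 3 = 1" then have "rh n mod 3 = 2" using rh_mod3[of n] by simp
    then show ?thesis using h by simp
  next
    assume h: "n mod 3 = 2" then have "rh n mod 3 = 0" using rh_mod3[of n] by simp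
    then show ?thesis using h by simp
  qed
  show "rh n mod 3 = 0 \<longleftrightarrow> n mod 3 = 2" using c by (rule conjunct1)
  show "rh n mod 3 = 2 \<longleftrightarrow> n mod 3 = 1" using c by (rule conjunct2)
qed
lemma bij_rh: "bij rh"
  by (rule o_bij[of rh']) (auto simp: fun_eq_iff rr)
lemma even_sg: "even (sg n) \<longleftrightarrow> n mod 3 = 0" by (auto simp: sg_def)
definition sw :: "nat \<Rightarrow> nat" where "sw n = (if even n then n+1 else n-1)"
lemma bij_sw: "bij sw"
  by (rule o_bij[of sw]) (auto simp: sw_def fun_eq_iff)
lemma even_sw: "even (sw n) \<longleftrightarrow> odd n" by (auto simp: sw_def)

lemma linf_bound: "(\<And>n. \<bar>x n\<bar> \<le> B) \<Longrightarrow> x \<in> linf"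
  unfolding linf_def by blast
lemma linf_add: "x \<in> linf \<Longrightarrow> y \<in> linf \<Longrightarrow> (\<lambda>n. x n + y n) \<in> linf"
proof -
  assume "x \<in> linf" "y \<in> linf"
  then obtain A B where "\<forall>n. \<bar>x n\<bar> \<le> A" "\<forall>n. \<bar>y n\<bar> \<le> B" unfolding linf_def by blast
  then have "\<bar>x n + y n\<bar> \<le> A + B" for n
    using abs_triangle_ineq[of "x n" "y n"] by (meson add_mono order_trans)
  then show ?thesis by (rule linf_bound)
qed
lemma linf_scale: "x \<in> linf \<Longrightarrow> (\<lambda>n. a * x n) \<in> linf"
proof -
  assume "x \<in> linf"
  then obtain A where A: "\<forall>n. \<bar>x n\<bar> \<le> A" unfolding linf_def by blast
  have "\<bar>a * x n\<bar> \<le> \<bar>a\<bar> * A" for n using A by (simp add: abs_mult mult_left_mono)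
  then show ?thesis by (rule linf_bound)
qed
lemma linf_const: "(\<lambda>n. t) \<in> linf" by (rule linf_bound[of _ "\<bar>t\<bar>"]) simp
lemma linf_cst: "cst t \<in> linf" unfolding cst_def by (rule linf_const)
lemma linf_comp: "x \<in> linf \<Longrightarrow> (\<lambda>n. x (f n)) \<in> linf"
  unfolding linf_def by blast
lemma linf_ind: "(\<lambda>n. if P n then (1::real) else 0) \<in> linf"
  by (rule linf_bound[of _ 1]) simp

theorem proposition8:
  shows "\<not> (\<exists>(R :: (nat \<Rightarrow> real) \<Rightarrow> (nat \<Rightarrow> real) \<Rightarrow> bool) (I :: (nat \<Rightarrow> real) \<Rightarrow> real).
            weak_order R \<and> monotonicity R \<and> continuity R \<and> ICRP R \<and> convexity R \<and>
            ISU R \<and> IPIS R \<and> constant_equivalent R I)"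
proof
  assume "\<exists>R I. weak_order R \<and> monotonicity R \<and> continuity R \<and> ICRP R \<and> convexity R \<and>
            ISU R \<and> IPIS R \<and> constant_equivalent R I"
  then obtain R I where mo: "monotonicity R" and ic: "ICRP R" and cv: "convexity R"
    and isu: "ISU R" and ip: "IPIS R" and ce: "constant_equivalent R I" by blast
  have rep: "\<And>x y. x \<in> linf \<Longrightarrow> y \<in> linf \<Longrightarrow> R x y \<longleftrightarrow> I y \<le> I x"
    using ce unfolding constant_equivalent_def by blast
  have ce1: "\<And>x. x \<in> linf \<Longrightarrow> R x (cst (I x)) \<and> R (cst (I x)) x"
    using ce unfolding constant_equivalent_def by blast
  have strict: "\<not> R (cst s) (cst t)" if "s < t" for s t
  proof
    assume "R (cst s) (cst t)"
    then have "R (\<lambda>n. cst s n + (-s)) (\<lambda>n. cst t n + (-s))"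
      using ic linf_cst unfolding ICRP_def by blast
    then have "R (cst 0) (cst (t-s))" by (simp add: cst_def)
    then have "R (\<lambda>n. (1/(t-s)) * cst 0 n) (\<lambda>n. (1/(t-s)) * cst (t-s) n)"
    proof -
      have "0 \<le> 1/(t-s)" using that by simp
      then show ?thesis using isu linf_cst \<open>R (cst 0) (cst (t-s))\<close> unfolding ISU_def by blast
    qed
    then have "R (cst 0) (cst 1)" using that by (simp add: cst_def)
    then show False using mo unfolding monotonicity_def by blast
  qed
  have F1: "I (cst t) = t" for t
  proof -
    have "R (cst t) (cst (I (cst t)))" "R (cst (I (cst t))) (cst t)" using ce1 linf_cst by blast+
    then have "\<not> t < I (cst t)" "\<not> I (cst t) < t" using strict by blast+
    then show ?thesis by linarith
  qed
  have icr: "\<And>x y t. x \<in> linf \<Longrightarrow> y \<in> linf \<Longrightarrow> R x y \<Longrightarrow> R (\<lambda>n. x n + t) (\<lambda>n. y n + t)"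
    using ic unfolding ICRP_def by blast
  have isr: "\<And>x y a. x \<in> linf \<Longrightarrow> y \<in> linf \<Longrightarrow> R x y \<Longrightarrow> a \<ge> 0 \<Longrightarrow> R (\<lambda>n. a * x n) (\<lambda>n. a * y n)"
    using isu unfolding ISU_def by blast
  have cvr: "\<And>x y t l. x \<in> linf \<Longrightarrow> y \<in> linf \<Longrightarrow> l \<in> {0..1} \<Longrightarrow> R x (cst t) \<Longrightarrow> R y (cst t)
     \<Longrightarrow> R (\<lambda>n. l * x n + (1 - l) * y n) (cst t)"
    using cv unfolding convexity_def by blast
  have ipr: "\<And>\<sigma> x d. bij \<sigma> \<Longrightarrow> x \<in> linf \<Longrightarrow> d \<in> linf \<Longrightarrow> R (\<lambda>n. x n + d n) x \<Longrightarrow> R (\<lambda>n. x n + d (\<sigma> n)) x"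
    using ip unfolding IPIS_def by blast
  have F2: "I (\<lambda>n. y n + t) = I y + t" if y: "y \<in> linf" for y t
  proof -
    have a: "R y (cst (I y))" "R (cst (I y)) y" using ce1 y by blast+
    have e: "(\<lambda>n. cst (I y) n + t) = cst (I y + t)" by (simp add: cst_def)
    have yl: "(\<lambda>n. y n + t) \<in> linf" using linf_add[OF y linf_const] .
    have A: "R (\<lambda>n. y n + t) (cst (I y + t))" using icr[where t=t, OF y linf_cst a(1)] e by simp
    have B: "R (cst (I y + t)) (\<lambda>n. y n + t)" using icr[where t=t, OF linf_cst y a(2)] e by simp
    have "I (cst (I y + t)) \<le> I (\<lambda>n. y n + t)" using rep[OF yl linf_cst] A by simp
    moreover have "I (\<lambda>n. y n + t) \<le> I (cst (I y + t))" using rep[OF linf_cst yl] B by simp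
    ultimately show ?thesis using F1[of "I y + t"] by linarith
  qed
  have F3: "I (\<lambda>n. a * y n) = a * I y" if y: "y \<in> linf" and a: "a \<ge> 0" for y a
  proof -
    have b: "R y (cst (I y))" "R (cst (I y)) y" using ce1 y by blast+
    have e: "(\<lambda>n. a * cst (I y) n) = cst (a * I y)" by (simp add: cst_def)
    have yl: "(\<lambda>n. a * y n) \<in> linf" using linf_scale[OF y] .
    have A: "R (\<lambda>n. a * y n) (cst (a * I y))" using isr[OF y linf_cst b(1) a] e by simp
    have B: "R (cst (a * I y)) (\<lambda>n. a * y n)" using isr[OF linf_cst y b(2) a] e by simp
    have "I (cst (a * I y)) \<le> I (\<lambda>n. a * y n)" using rep[OF yl linf_cst] A by simp
    moreover have "I (\<lambda>n. a * y n) \<le> I (cst (a * I y))" using rep[OF linf_cst yl] B by simp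
    ultimately show ?thesis using F1[of "a * I y"] by linarith
  qed
  have F5: "t \<le> I (\<lambda>n. l * x n + (1 - l) * y n)"
    if x: "x \<in> linf" and y: "y \<in> linf" and "t \<le> I x" "t \<le> I y" "0 \<le> l" "l \<le> 1" for x y t l
  proof -
    have "R x (cst t)" using rep[OF x linf_cst] F1[of t] that by simp
    moreover have "R y (cst t)" using rep[OF y linf_cst] F1[of t] that by simp
    ultimately have A: "R (\<lambda>n. l * x n + (1 - l) * y n) (cst t)"
      using cvr[OF x y] that by simp
    have "(\<lambda>n. l * x n + (1 - l) * y n) \<in> linf"
      using linf_add[OF linf_scale[OF x] linf_scale[OF y]] .
    from rep[OF this linf_cst] A F1[of t] show ?thesis by simp
  qed
  have F7: "I x \<le> I (\<lambda>n. x n + d (\<sigma> n))"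
    if s: "bij \<sigma>" and x: "x \<in> linf" and d: "d \<in> linf" and h: "I x \<le> I (\<lambda>n. x n + d n)" for x d \<sigma>
  proof -
    have "R (\<lambda>n. x n + d n) x" using rep[OF linf_add[OF x d] x] h by simp
    then have "R (\<lambda>n. x n + d (\<sigma> n)) x" using ipr[OF s x d] by simp
    then show ?thesis using rep[OF linf_add[OF x linf_comp[OF d]] x] by simp
  qed
  have F6: "I y \<le> I (\<lambda>n. y (\<sigma> n))" if s: "bij \<sigma>" and y: "y \<in> linf" for y \<sigma>
  proof -
    define d where "d = (\<lambda>n. y n - I y)"
    have d: "d \<in> linf" unfolding d_def using linf_add[OF y linf_const[of "- I y"]] by simp
    have e1: "(\<lambda>n. cst (I y) n + d n) = y" by (simp add: d_def cst_def)
    have e2: "(\<lambda>n. cst (I y) n + d (\<sigma> n)) = (\<lambda>n. y (\<sigma> n))" by (simp add: d_def cst_def)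
    have "I (cst (I y)) \<le> I (\<lambda>n. cst (I y) n + d (\<sigma> n))"
      by (rule F7[OF s linf_cst d]) (simp add: e1 F1)
    then show ?thesis using e2 F1 by simp
  qed
  define e :: "nat \<Rightarrow> real" where "e = (\<lambda>n. if even n then 1 else 0)"
  define od :: "nat \<Rightarrow> real" where "od = (\<lambda>n. if odd n then 1 else 0)"
  define a :: "nat \<Rightarrow> nat \<Rightarrow> real" where "a = (\<lambda>r n. if n mod 3 = r then 1 else 0)"
  have le: "e \<in> linf" "od \<in> linf" "\<And>r. a r \<in> linf" unfolding e_def od_def a_def by (rule linf_ind)+
  define c where "c = I e"
  have "(\<lambda>n. e (sw n)) = od" by (auto simp: e_def od_def even_sw)
  then have co: "c \<le> I od" using F6[OF bij_sw le(1)] c_def by simp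
  have "(\<lambda>n. od (sw n)) = e" by (auto simp: e_def od_def even_sw)
  then have oc: "I od \<le> c" using F6[OF bij_sw le(2)] c_def by simp
  have "(\<lambda>n. e (sg n)) = a 0" by (auto simp: e_def a_def even_sg)
  then have a0: "c \<le> I (a 0)" using F6[OF bij_sg le(1)] c_def by simp
  have "(\<lambda>n. a 0 (rh n)) = a 2" by (auto simp: a_def rh_mod)
  then have a2: "c \<le> I (a 2)" using F6[OF bij_rh le(3)[of 0]] a0 by simp
  have "(\<lambda>n. a 2 (rh n)) = a 1" by (auto simp: a_def rh_mod)
  then have a1: "c \<le> I (a 1)" using F6[OF bij_rh le(3)[of 2]] a2 by simp
  define w where "w = (\<lambda>n. (1/2) * a 0 n + (1 - 1/2) * a 1 n)"
  have wl: "w \<in> linf" unfolding w_def using le linf_add linf_scale by blast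
  have w: "c \<le> I w" unfolding w_def by (rule F5) (use le a0 a1 in auto)
  have z: "c \<le> I (\<lambda>n. (1/3) * a 2 n + (1 - 1/3) * w n)"
    by (rule F5) (use le a2 w wl in auto)
  have "(\<lambda>n. (1/3) * a 2 n + (1 - 1/3) * w n) = cst (1/3)"
  proof
    fix n
    have "(n::nat) mod 3 = 0 \<or> n mod 3 = 1 \<or> n mod 3 = 2" by linarith
    then show "(1/3) * a 2 n + (1 - 1/3) * w n = cst (1/3) n"
      by (auto simp: a_def w_def cst_def)
  qed
  then have c3: "c \<le> 1/3" using z F1 by simp
  have lmo: "(\<lambda>n. - od n) \<in> linf" using linf_scale[OF le(2), of "-1"] by simp
  define d where "d = (\<lambda>n. od n - e n)"
  have ld: "d \<in> linf" unfolding d_def using linf_add[OF le(2) linf_scale[OF le(1), of "-1"]] by simp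
  have "(\<lambda>n. - od n) = (\<lambda>n. e n + (-1))" by (auto simp: e_def od_def)
  then have Ix: "I (\<lambda>n. - od n) = c - 1" using F2[OF le(1), of "-1"] c_def by simp
  have "(\<lambda>n. - od n + d n) = (\<lambda>n. od n + (-1))" by (auto simp: e_def od_def d_def)
  then have "I (\<lambda>n. - od n + d n) = c - 1" using F2[OF le(2), of "-1"] co oc by simp
  then have "I (\<lambda>n. - od n) \<le> I (\<lambda>n. - od n + d (sw n))"
    using F7[OF bij_sw lmo ld] Ix by simp
  moreover have "(\<lambda>n. - od n + d (sw n)) = (\<lambda>n. 3 * e n + (-2))"
    by (auto simp: e_def od_def d_def even_sw)
  moreover have "I (\<lambda>n. 3 * e n + (-2)) = 3 * c - 2"
    using F2[OF linf_scale[OF le(1)], of 3 "-2"] F3[OF le(1), of 3] c_def by simp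
  ultimately have "c - 1 \<le> 3 * c - 2" using Ix by simp
  then show False using c3 by simp
qed

end
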